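(* Let $T>0$, $\theta\ge0$, and let $g:[-T,T)^d\times[-T,T)^d\to\mathbb C$ be symmetric and $\theta$-biadditive in $[-T,T)^d\times[-T,T)^d$. Then there is a symmetric, biadditive function $G$ in $[-T,T)^d\times[-T,T)^d$ such that $$|g({\bf x},{\bf y})-G({\bf x},{\bf y})|\le(7d^2-1)\theta\quad\text{for all }{\bf x},{\bf y}\in[-T,T)^d.$$ Moreover, if the projections of $g({\bf x},{\bf y})$ onto each coordinate (i.e. the functions $(x,y)\mapsto g(x{\bf e}_i,y{\bf e}_k)$) are continuous in at least one point (with respect to both arguments), then $G$ is continuous and bilinear in $[-T,T)^d\times[-T,T)^d$.
   Context: ${\bf e}_i$ is the $i$-th standard basis vector. For $\mathcal E\subseteq\mathbb R^d$, $g$ is $\theta$-biadditive in $\mathcal E\times\mathcal E$ if $|g({\bf x}_1+{\bf x}_2,{\bf y})-g({\bf x}_1,{\bf y})-g({\bf x}_2,{\bf y})|\le\theta$ and $|g({\bf x},{\bf y}_1+{\bf y}_2)-g({\bf x},{\bf y}_1)-g({\bf x},{\bf y}_2)|\le\theta$ for all ${\bf x}_1,{\bf x}_2,{\bf y},{\bf x},{\bf y}_1,{\bf y}_2\in\mathcal E$ with ${\bf x}_1+{\bf x}_2\in\mathcal E$ and ${\bf y}_1+{\bf y}_2\in\mathcal E$; biadditive means $0$-biadditive; symmetric means $g({\bf x},{\bf y})=g({\bf y},{\bf x})$ for all ${\bf x},{\bf y}\in\mathcal E$. *)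

theory Defs
  imports "HOL-Analysis.Analysis"
begin

definition cube :: "real \<Rightarrow> (real ^ 'n) set" where
  "cube T = {x. \<forall>i. - T \<le> x $ i \<and> x $ i < T}"

definition biadditive_approx_on ::
  "real \<Rightarrow> 'a::plus set \<Rightarrow> ('a \<Rightarrow> 'a \<Rightarrow> 'b::real_normed_vector) \<Rightarrow> bool" where
  "biadditive_approx_on \<theta> E g \<longleftrightarrow>
     (\<forall>x1\<in>E. \<forall>x2\<in>E. \<forall>y\<in>E. x1 + x2 \<in> E \<longrightarrow>
        norm (g (x1 + x2) y - g x1 y - g x2 y) \<le> \<theta>) \<and>
     (\<forall>x\<in>E. \<forall>y1\<in>E. \<forall>y2\<in>E. y1 + y2 \<in> E \<longrightarrow>
        norm (g x (y1 + y2) - g x y1 - g x y2) \<le> \<theta>)"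

definition biadditive_on :: "'a::plus set \<Rightarrow> ('a \<Rightarrow> 'a \<Rightarrow> 'b::real_normed_vector) \<Rightarrow> bool" where
  "biadditive_on E g \<longleftrightarrow> biadditive_approx_on 0 E g"

definition symmetric_on :: "'a set \<Rightarrow> ('a \<Rightarrow> 'a \<Rightarrow> 'b) \<Rightarrow> bool" where
  "symmetric_on E g \<longleftrightarrow> (\<forall>x\<in>E. \<forall>y\<in>E. g x y = g y x)"

definition bilinear_on :: "'a::real_vector set \<Rightarrow> ('a \<Rightarrow> 'a \<Rightarrow> 'b::real_vector) \<Rightarrow> bool" where
  "bilinear_on E G \<longleftrightarrow> (\<exists>B. bilinear B \<and> (\<forall>x\<in>E. \<forall>y\<in>E. G x y = B x y))"

end

theory Submission
  imports Defs
begin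

definition nn :: "real \<Rightarrow> real \<Rightarrow> int" where "nn T x = \<lfloor>x / T + 1/2\<rfloor>"
definition rr :: "real \<Rightarrow> real \<Rightarrow> real" where "rr T x = x - of_int (nn T x) * T"
definition XX :: "real \<Rightarrow> (real \<Rightarrow> complex) \<Rightarrow> real \<Rightarrow> complex" where
  "XX T u x = - of_int (nn T x) * u (-T) + u (rr T x)"
definition LL :: "real \<Rightarrow> (real \<Rightarrow> complex) \<Rightarrow> real \<Rightarrow> complex" where
  "LL T u x = lim (\<lambda>k. XX T u (2^k * x) / 2^k)"
definition add_approx :: "real \<Rightarrow> real \<Rightarrow> (real \<Rightarrow> complex) \<Rightarrow> bool" where
  "add_approx T \<theta> u \<longleftrightarrow> (\<forall>a b. a \<in> {-T..<T} \<longrightarrow> b \<in> {-T..<T} \<longrightarrow> a + b \<in> {-T..<T} \<longrightarrow>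
      norm (u (a + b) - u a - u b) \<le> \<theta>)"

lemma add_approxD:
  assumes "add_approx T \<theta> u" "a \<in> {-T..<T}" "b \<in> {-T..<T}" "a + b \<in> {-T..<T}"
  shows "norm (u (a + b) - u a - u b) \<le> \<theta>"
  using assms unfolding add_approx_def by blast

lemma add_approx_nonneg:
  assumes "T > 0" "add_approx T \<theta> u" shows "0 \<le> \<theta>"
  using add_approxD[OF assms(2), of 0 0] assms(1) by (smt (verit) atLeastLessThan_iff norm_ge_zero)

lemma nn_char:
  assumes "T > 0" "x = of_int m * T + w" "-T/2 \<le> w" "w < T/2"
  shows "nn T x = m" "rr T x = w"
proof -
  have "x / T + 1/2 = of_int m + (w / T + 1/2)" using assms by (simp add: field_simps)
  moreover have "0 \<le> w / T + 1/2" "w / T + 1/2 < 1" using assms by (simp_all add: field_simps)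
  ultimately show "nn T x = m" unfolding nn_def by (simp add: floor_eq_iff)
  then show "rr T x = w" unfolding rr_def using assms by simp
qed

lemma rr_bounds:
  assumes "T > 0"
  shows "-T/2 \<le> rr T x" "rr T x < T/2" "x = of_int (nn T x) * T + rr T x"
proof -
  have a: "of_int (nn T x) \<le> x / T + 1/2" "x / T + 1/2 < of_int (nn T x) + 1"
    unfolding nn_def by linarith+
  have e: "x / T + 1/2 = (x + T/2) / T" using assms by (simp add: field_simps)
  from a(1) have "of_int (nn T x) * T \<le> x + T/2" unfolding e using assms by (simp add: le_divide_eq)
  then show "-T/2 \<le> rr T x" unfolding rr_def by simp
  from a(2) have "x + T/2 < (of_int (nn T x) + 1) * T" unfolding e using assms by (simp add: divide_less_eq)
  then show "rr T x < T/2" unfolding rr_def by (simp add: algebra_simps)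
  show "x = of_int (nn T x) * T + rr T x" unfolding rr_def by simp
qed

lemma XX_defect:
  assumes T: "T > 0" and u: "add_approx T \<theta> u"
  shows "norm (XX T u (x + y) - XX T u x - XX T u y) \<le> 2 * \<theta>"
proof -
  note bx = rr_bounds[OF T, of x] and bY = rr_bounds[OF T, of y]
  define w where "w = rr T x + rr T y"
  define m where "m = nn T x + nn T y"
  have xy: "x + y = of_int m * T + w" using bx(3) bY(3) unfolding m_def w_def by (simp add: algebra_simps)
  have D: "a \<in> {-T..<T}" if "-T \<le> a" "a < T" for a using that by auto
  have rxD: "rr T x \<in> {-T..<T}" "rr T y \<in> {-T..<T}" "w \<in> {-T..<T}" "-T \<in> {-T..<T}"
    using bx bY T unfolding w_def by auto
  have e1: "norm (u w - u (rr T x) - u (rr T y)) \<le> \<theta>"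
    using u rxD unfolding add_approx_def w_def by auto
  consider "w < -T/2" | "-T/2 \<le> w \<and> w < T/2" | "T/2 \<le> w" by linarith
  then show ?thesis
  proof cases
    case 1
    have xy': "x + y = of_int (m - 1) * T + (w + T)" using xy by (simp add: algebra_simps)
    have c: "nn T (x+y) = m - 1" "rr T (x+y) = w + T" using nn_char[OF T xy'] 1 rxD by auto
    have "norm (u ((w + T) + (-T)) - u (w + T) - u (-T)) \<le> \<theta>"
      by (rule add_approxD[OF u]) (use 1 rxD T in auto)
    then have e2: "norm (u w - u (w + T) - u (-T)) \<le> \<theta>" by simp
    have "XX T u (x + y) - XX T u x - XX T u y
        = (u w - u (rr T x) - u (rr T y)) - (u w - u (w + T) - u (-T))"
      unfolding XX_def using 1 bx bY
      by (simp add: m_def algebra_simps c)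
    also have "norm \<dots> \<le> \<theta> + \<theta>" by (rule order_trans[OF norm_triangle_ineq4]) (use e1 e2 in auto)
    finally show ?thesis by simp
  next
    case 2
    have c: "nn T (x+y) = m" "rr T (x+y) = w" using nn_char[OF T xy] 2 by auto
    have "XX T u (x + y) - XX T u x - XX T u y = u w - u (rr T x) - u (rr T y)"
      unfolding XX_def using 2 by (simp add: m_def algebra_simps c)
    then show ?thesis using e1 u unfolding add_approx_def by (smt (verit) norm_ge_zero)
  next
    case 3
    have xy': "x + y = of_int (m + 1) * T + (w - T)" using xy by (simp add: algebra_simps)
    have c: "nn T (x+y) = m + 1" "rr T (x+y) = w - T" using nn_char[OF T xy'] 3 rxD by auto
    have "norm (u (w + (-T)) - u w - u (-T)) \<le> \<theta>"
      by (rule add_approxD[OF u]) (use 3 rxD T in auto)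
    then have e2: "norm (u (w - T) - u w - u (-T)) \<le> \<theta>" by simp
    have "XX T u (x + y) - XX T u x - XX T u y
        = (u w - u (rr T x) - u (rr T y)) + (u (w - T) - u w - u (-T))"
      unfolding XX_def using 3 bx bY
      by (simp add: m_def algebra_simps c)
    also have "norm \<dots> \<le> \<theta> + \<theta>" by (rule order_trans[OF norm_triangle_ineq]) (use e1 e2 in auto)
    finally show ?thesis by simp
  qed
qed

lemma XX_close:
  assumes T: "T > 0" and u: "add_approx T \<theta> u" and x: "x \<in> {-T..<T}"
  shows "norm (XX T u x - u x) \<le> \<theta>"
proof -
  consider "x < -T/2" | "-T/2 \<le> x \<and> x < T/2" | "T/2 \<le> x" by linarith
  then show ?thesis
  proof cases
    case 1
    have "x = of_int (-1) * T + (x + T)" by simp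
    note c = nn_char[OF T this]
    have "norm (u ((x + T) + (-T)) - u (x + T) - u (-T)) \<le> \<theta>"
      by (rule add_approxD[OF u]) (use 1 x T in auto)
    moreover have "XX T u x - u x = - (u ((x + T) + (-T)) - u (x + T) - u (-T))"
      unfolding XX_def using 1 x by (simp add: c)
    ultimately show ?thesis by (metis norm_minus_cancel)
  next
    case 2
    have "x = of_int 0 * T + x" by simp
    note c = nn_char[OF T this]
    show ?thesis unfolding XX_def using 2 c add_approx_nonneg[OF T u] by auto
  next
    case 3
    have "x = of_int 1 * T + (x - T)" by simp
    note c = nn_char[OF T this]
    have "norm (u (x + (-T)) - u x - u (-T)) \<le> \<theta>"
      by (rule add_approxD[OF u]) (use 3 x T in auto)
    then have e: "norm (u (x - T) - u x - u (-T)) \<le> \<theta>" by simp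
    have eq: "XX T u x - u x = u (x - T) - u x - u (-T)"
      unfolding XX_def using 3 x by (simp add: c)
    show ?thesis unfolding eq by (rule e)
  qed
qed

lemma hyers_point:
  fixes F :: "real \<Rightarrow> complex"
  assumes d: "\<And>x y. norm (F (x + y) - F x - F y) \<le> \<epsilon>"
  shows "\<exists>a. (\<lambda>k. F (2^k * x) / 2^k) \<longlonglongrightarrow> a \<and> norm (a - F x) \<le> \<epsilon>"
proof -
  define s where "s = (\<lambda>k::nat. F (2^k * x) / 2^k)"
  define g where "g j = \<epsilon> / 2 * (1/2)^j" for j :: nat
  have dj: "norm (s (Suc j) - s j) \<le> g j" for j
  proof -
    have "s (Suc j) - s j = (F (2^j * x + 2^j * x) - F (2^j * x) - F (2^j * x)) / 2^(Suc j)"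
      unfolding s_def by (simp add: field_simps)
    also have "norm \<dots> = norm (F (2^j * x + 2^j * x) - F (2^j * x) - F (2^j * x)) / 2^(Suc j)"
      by (simp add: norm_divide norm_power)
    also have "\<dots> \<le> \<epsilon> / 2^(Suc j)" by (rule divide_right_mono[OF d]) simp
    also have "\<dots> = g j" unfolding g_def by (simp add: power_divide)
    finally show ?thesis .
  qed
  have sg: "summable g" unfolding g_def by (intro summable_mult summable_geometric) simp
  have sd: "summable (\<lambda>j. s (Suc j) - s j)"
    by (rule summable_comparison_test'[OF sg dj])
  have "(\<lambda>n. \<Sum>j<n. s (Suc j) - s j) \<longlonglongrightarrow> suminf (\<lambda>j. s (Suc j) - s j)"
    by (rule summable_LIMSEQ[OF sd])
  then have "(\<lambda>n. s n - s 0) \<longlonglongrightarrow> suminf (\<lambda>j. s (Suc j) - s j)"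
    by (simp add: sum_lessThan_telescope)
  then have "(\<lambda>n. (s n - s 0) + s 0) \<longlonglongrightarrow> suminf (\<lambda>j. s (Suc j) - s j) + s 0"
    by (intro tendsto_intros)
  moreover have "s 0 = F x" by (simp add: s_def)
  ultimately have lim: "s \<longlonglongrightarrow> suminf (\<lambda>j. s (Suc j) - s j) + F x" by simp
  have "(\<lambda>j. \<epsilon> / 2 * (1/2)^j) sums (\<epsilon> / 2 * (1 / (1 - 1/2)))"
    by (intro sums_mult geometric_sums) simp
  then have "suminf g = \<epsilon>" unfolding g_def by (simp add: sums_unique[symmetric])
  then have "norm (suminf (\<lambda>j. s (Suc j) - s j)) \<le> \<epsilon>" using norm_suminf_le[OF dj sg] by simp
  with lim have "s \<longlonglongrightarrow> suminf (\<lambda>j. s (Suc j) - s j) + F x \<and> norm ((suminf (\<lambda>j. s (Suc j) - s j) + F x) - F x) \<le> \<epsilon>"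
    by simp
  then show ?thesis unfolding s_def by blast
qed

lemma hyers:
  fixes F :: "real \<Rightarrow> complex"
  assumes d: "\<And>x y. norm (F (x + y) - F x - F y) \<le> \<epsilon>"
  defines "A \<equiv> \<lambda>x. lim (\<lambda>k. F (2^k * x) / 2^k)"
  shows "\<And>x. (\<lambda>k. F (2^k * x) / 2^k) \<longlonglongrightarrow> A x"
    and "\<And>x. norm (A x - F x) \<le> \<epsilon>"
    and "\<And>x y. A (x + y) = A x + A y"
proof -
  fix x
  obtain a where a: "(\<lambda>k. F (2^k * x) / 2^k) \<longlonglongrightarrow> a" "norm (a - F x) \<le> \<epsilon>"
    using hyers_point[OF d] by blast
  then have "A x = a" unfolding A_def by (simp add: limI)
  with a show "(\<lambda>k. F (2^k * x) / 2^k) \<longlonglongrightarrow> A x" "norm (A x - F x) \<le> \<epsilon>" by auto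
next
  have conv: "(\<lambda>k. F (2^k * x) / 2^k) \<longlonglongrightarrow> A x" for x
  proof -
    obtain a where a: "(\<lambda>k. F (2^k * x) / 2^k) \<longlonglongrightarrow> a"
      using hyers_point[OF d] by blast
    then show ?thesis unfolding A_def by (simp add: limI)
  qed
  fix x y
  have "(\<lambda>k. F (2^k * (x + y)) / 2^k - F (2^k * x) / 2^k - F (2^k * y) / 2^k) \<longlonglongrightarrow> A (x + y) - A x - A y"
    by (intro tendsto_intros conv)
  moreover have "(\<lambda>k. F (2^k * (x + y)) / 2^k - F (2^k * x) / 2^k - F (2^k * y) / 2^k) \<longlonglongrightarrow> 0"
  proof (rule tendsto_norm_zero_cancel, rule tendsto_sandwich[of "\<lambda>_. 0" _ _ "\<lambda>k. \<epsilon> / 2^k"])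
    show "\<forall>\<^sub>F k in sequentially. 0 \<le> norm (F (2^k * (x + y)) / 2^k - F (2^k * x) / 2^k - F (2^k * y) / 2^k)"
      by simp
    show "\<forall>\<^sub>F k in sequentially. norm (F (2^k * (x + y)) / 2^k - F (2^k * x) / 2^k - F (2^k * y) / 2^k) \<le> \<epsilon> / 2^k"
    proof (rule always_eventually, rule allI)
      fix k :: nat
      have "F (2^k * (x + y)) / 2^k - F (2^k * x) / 2^k - F (2^k * y) / 2^k
          = (F (2^k * x + 2^k * y) - F (2^k * x) - F (2^k * y)) / 2^k"
        by (simp add: algebra_simps diff_divide_distrib add_divide_distrib)
      also have "norm \<dots> = norm (F (2^k * x + 2^k * y) - F (2^k * x) - F (2^k * y)) / 2^k"
        by (simp add: norm_divide norm_power)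
      also have "\<dots> \<le> \<epsilon> / 2^k" by (rule divide_right_mono[OF d]) simp
      finally show "norm (F (2^k * (x + y)) / 2^k - F (2^k * x) / 2^k - F (2^k * y) / 2^k) \<le> \<epsilon> / 2^k" .
    qed
    show "(\<lambda>_. 0) \<longlonglongrightarrow> (0::real)" by simp
    have "(\<lambda>k. \<epsilon> * (1/2)^k) \<longlonglongrightarrow> 0"
      by (rule tendsto_mult_right_zero) (rule LIMSEQ_power_zero, simp)
    moreover have "(\<lambda>k. \<epsilon> * (1/2)^k) = (\<lambda>k. \<epsilon> / 2^k)" by (simp add: power_divide)
    ultimately show "(\<lambda>k. \<epsilon> / 2^k) \<longlonglongrightarrow> 0" by simp
  qed
  ultimately have "A (x + y) - A x - A y = 0" by (rule LIMSEQ_unique)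
  then show "A (x + y) = A x + A y" by (simp add: algebra_simps)
qed

lemma LL_props:
  assumes T: "T > 0" and u: "add_approx T \<theta> u"
  shows "\<And>x. (\<lambda>k. XX T u (2^k * x) / 2^k) \<longlonglongrightarrow> LL T u x"
    and "\<And>x y. LL T u (x + y) = LL T u x + LL T u y"
    and "\<And>x. x \<in> {-T..<T} \<Longrightarrow> norm (LL T u x - u x) \<le> 3 * \<theta>"
proof -
  have d: "norm (XX T u (x + y) - XX T u x - XX T u y) \<le> 2 * \<theta>" for x y
    by (rule XX_defect[OF T u])
  have LLe: "LL T u = (\<lambda>x. lim (\<lambda>k. XX T u (2^k * x) / 2^k))"
    unfolding LL_def by (rule ext) simp
  note h = hyers[of "XX T u" "2 * \<theta>", OF d]
  show "\<And>x. (\<lambda>k. XX T u (2^k * x) / 2^k) \<longlonglongrightarrow> LL T u x" using h(1) by (simp add: LL_def)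
  show "\<And>x y. LL T u (x + y) = LL T u x + LL T u y" using h(3) by (simp add: LL_def)
  fix x assume x: "x \<in> {-T..<T}"
  have "norm (LL T u x - u x) \<le> norm (LL T u x - XX T u x) + norm (XX T u x - u x)"
    using norm_triangle_ineq[of "LL T u x - XX T u x" "XX T u x - u x"] by simp
  also have "\<dots> \<le> 2 * \<theta> + \<theta>" by (intro add_mono XX_close[OF T u x]) (use h(2) in \<open>simp add: LL_def\<close>)
  finally show "norm (LL T u x - u x) \<le> 3 * \<theta>" by simp
qed

lemma nn_abs:
  assumes T: "T > 0"
  shows "\<bar>of_int (nn T y)\<bar> \<le> \<bar>y\<bar> / T + 1/2"
proof -
  note b = rr_bounds[OF T, of y]
  have e: "of_int (nn T y) * T = y - rr T y" using b(3) by simp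
  have "\<bar>rr T y\<bar> \<le> T/2" using b(1,2) by (simp add: abs_le_iff)
  then have "\<bar>y - rr T y\<bar> \<le> \<bar>y\<bar> + T/2" using abs_triangle_ineq4[of y "rr T y"] by linarith
  then have "\<bar>of_int (nn T y) * T\<bar> \<le> \<bar>y\<bar> + T/2" unfolding e .
  then have "\<bar>of_int (nn T y)\<bar> * T \<le> \<bar>y\<bar> + T/2" using T by (simp add: abs_mult)
  then show ?thesis using T by (simp add: field_simps)
qed

lemma LL_comb:
  assumes T: "T > 0" and u: "add_approx T \<theta>1 u" and v: "add_approx T \<theta>2 v" and w: "add_approx T \<theta>3 w"
    and p: "\<And>\<sigma>. \<sigma> \<in> {-T..<T} \<Longrightarrow> norm (u \<sigma> - v \<sigma> - w \<sigma>) \<le> \<eta>"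
  shows "norm (LL T u x - LL T v x - LL T w x) \<le> \<bar>x\<bar> / T * \<eta>"
proof -
  define q where "q = (\<lambda>\<sigma>. u \<sigma> - v \<sigma> - w \<sigma>)"
  have eta: "0 \<le> \<eta>" using p[of 0] T by (smt (verit) atLeastLessThan_iff norm_ge_zero)
  have Xq: "XX T q y = XX T u y - XX T v y - XX T w y" for y
    unfolding XX_def q_def by (simp add: algebra_simps)
  have "(\<lambda>k. XX T u (2^k * x) / 2^k - XX T v (2^k * x) / 2^k - XX T w (2^k * x) / 2^k)
        \<longlonglongrightarrow> LL T u x - LL T v x - LL T w x"
    by (intro tendsto_intros LL_props(1)[OF T u] LL_props(1)[OF T v] LL_props(1)[OF T w])
  then have lim: "(\<lambda>k. XX T q (2^k * x) / 2^k) \<longlonglongrightarrow> LL T u x - LL T v x - LL T w x"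
    by (simp add: Xq diff_divide_distrib)
  have bnd: "norm (XX T q y) \<le> (\<bar>y\<bar> / T + 1/2) * \<eta> + \<eta>" for y
  proof -
    have r: "rr T y \<in> {-T..<T}" using rr_bounds[OF T, of y] by auto
    have mT: "-T \<in> {-T..<T}" using T by auto
    have "norm (XX T q y) \<le> norm (of_int (nn T y) * q (-T)) + norm (q (rr T y))"
      unfolding XX_def by (metis norm_minus_cancel norm_triangle_ineq minus_mult_left)
    also have "\<dots> \<le> (\<bar>y\<bar> / T + 1/2) * \<eta> + \<eta>"
    proof (rule add_mono)
      have "norm (of_int (nn T y) * q (-T)) = \<bar>of_int (nn T y)\<bar> * norm (q (-T))"
        by (simp add: norm_mult)
      also have "\<dots> \<le> (\<bar>y\<bar> / T + 1/2) * \<eta>"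
        by (intro mult_mono nn_abs[OF T]) (use p[OF mT] q_def T in \<open>auto intro: add_nonneg_nonneg\<close>)
      finally show "norm (of_int (nn T y) * q (-T)) \<le> (\<bar>y\<bar> / T + 1/2) * \<eta>" .
      show "norm (q (rr T y)) \<le> \<eta>" using p[OF r] q_def by simp
    qed
    finally show ?thesis .
  qed
  have bk: "norm (XX T q (2^k * x) / 2^k) \<le> \<bar>x\<bar> / T * \<eta> + 2 * \<eta> * (1/2)^k" for k :: nat
  proof -
    have "norm (XX T q (2^k * x) / 2^k) = norm (XX T q (2^k * x)) / 2^k"
      by (simp add: norm_divide norm_power)
    also have "\<dots> \<le> ((\<bar>2^k * x\<bar> / T + 1/2) * \<eta> + \<eta>) / 2^k"
      by (rule divide_right_mono[OF bnd]) simp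
    also have "\<dots> = \<bar>x\<bar> / T * \<eta> + (3/2) * \<eta> * (1/2)^k"
      by (simp add: abs_mult field_simps power_divide)
    also have "\<dots> \<le> \<bar>x\<bar> / T * \<eta> + 2 * \<eta> * (1/2)^k"
      using eta by (intro add_left_mono mult_right_mono) auto
    finally show ?thesis .
  qed
  have "(\<lambda>k. \<bar>x\<bar> / T * \<eta> + 2 * \<eta> * (1/2)^k) \<longlonglongrightarrow> \<bar>x\<bar> / T * \<eta> + 2 * \<eta> * 0"
    by (intro tendsto_intros LIMSEQ_power_zero) simp
  then have l2: "(\<lambda>k. \<bar>x\<bar> / T * \<eta> + 2 * \<eta> * (1/2)^k) \<longlonglongrightarrow> \<bar>x\<bar> / T * \<eta>" by simp
  show ?thesis
    by (rule LIMSEQ_le[OF tendsto_norm[OF lim] l2]) (use bk in auto)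
qed

definition G2 :: "real \<Rightarrow> (real \<Rightarrow> real \<Rightarrow> complex) \<Rightarrow> real \<Rightarrow> real \<Rightarrow> complex" where
  "G2 T \<phi> s t = LL T (\<lambda>\<sigma>. LL T (\<phi> \<sigma>) t) s"

lemma two_dim:
  assumes T: "T > 0"
    and h1: "\<And>s. s \<in> {-T..<T} \<Longrightarrow> add_approx T \<theta> (\<phi> s)"
    and h2: "\<And>t. t \<in> {-T..<T} \<Longrightarrow> add_approx T \<theta> (\<lambda>\<sigma>. \<phi> \<sigma> t)"
  shows "\<And>s1 s2 t. t \<in> {-T..<T} \<Longrightarrow> G2 T \<phi> (s1 + s2) t = G2 T \<phi> s1 t + G2 T \<phi> s2 t"
    and "\<And>s t1 t2. t1 \<in> {-T..<T} \<Longrightarrow> t2 \<in> {-T..<T} \<Longrightarrow> t1 + t2 \<in> {-T..<T} \<Longrightarrow>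
           G2 T \<phi> s (t1 + t2) = G2 T \<phi> s t1 + G2 T \<phi> s t2"
    and "\<And>s t. s \<in> {-T..<T} \<Longrightarrow> t \<in> {-T..<T} \<Longrightarrow> norm (G2 T \<phi> s t - \<phi> s t) \<le> 6 * \<theta>"
proof -
  have th: "0 \<le> \<theta>" using add_approx_nonneg[OF T h1[of 0]] T by simp
  have Ht: "add_approx T \<theta> (\<lambda>\<sigma>. LL T (\<phi> \<sigma>) t)" if t: "t \<in> {-T..<T}" for t
    unfolding add_approx_def
  proof (intro allI impI)
    fix a b assume ab: "a \<in> {-T..<T}" "b \<in> {-T..<T}" "a + b \<in> {-T..<T}"
    have "norm (LL T (\<phi> (a + b)) t - LL T (\<phi> a) t - LL T (\<phi> b) t) \<le> \<bar>t\<bar> / T * \<theta>"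
    proof (rule LL_comb[OF T h1 h1 h1])
      fix \<sigma> :: real assume "\<sigma> \<in> {-T..<T}"
      from add_approxD[OF h2[OF this] ab] show "norm (\<phi> (a + b) \<sigma> - \<phi> a \<sigma> - \<phi> b \<sigma>) \<le> \<theta>" .
    qed (use ab in auto)
    also have "\<dots> \<le> 1 * \<theta>"
      using t T th by (intro mult_right_mono) (auto simp: divide_le_eq_1)
    finally show "norm (LL T (\<phi> (a + b)) t - LL T (\<phi> a) t - LL T (\<phi> b) t) \<le> \<theta>" by simp
  qed
  show "G2 T \<phi> (s1 + s2) t = G2 T \<phi> s1 t + G2 T \<phi> s2 t" if "t \<in> {-T..<T}" for s1 s2 t
    unfolding G2_def by (rule LL_props(2)[OF T Ht[OF that]])
  show "G2 T \<phi> s (t1 + t2) = G2 T \<phi> s t1 + G2 T \<phi> s t2"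
    if t: "t1 \<in> {-T..<T}" "t2 \<in> {-T..<T}" "t1 + t2 \<in> {-T..<T}" for s t1 t2
  proof -
    have "norm (G2 T \<phi> s (t1 + t2) - G2 T \<phi> s t1 - G2 T \<phi> s t2) \<le> \<bar>s\<bar> / T * 0"
      unfolding G2_def
      by (rule LL_comb[OF T Ht Ht Ht]) (use t LL_props(2)[OF T h1] in auto)
    then show ?thesis by (simp add: algebra_simps)
  qed
  show "norm (G2 T \<phi> s t - \<phi> s t) \<le> 6 * \<theta>" if st: "s \<in> {-T..<T}" "t \<in> {-T..<T}" for s t
  proof -
    have "norm (G2 T \<phi> s t - \<phi> s t) \<le> norm (G2 T \<phi> s t - LL T (\<phi> s) t) + norm (LL T (\<phi> s) t - \<phi> s t)"
      using norm_triangle_ineq[of "G2 T \<phi> s t - LL T (\<phi> s) t" "LL T (\<phi> s) t - \<phi> s t"] by simp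
    also have "\<dots> \<le> 3 * \<theta> + 3 * \<theta>"
      unfolding G2_def by (intro add_mono LL_props(3)[OF T Ht] LL_props(3)[OF T h1] st)
    finally show ?thesis by simp
  qed
qed

lemma add_mult:
  fixes f :: "real \<Rightarrow> complex"
  assumes T: "T > 0"
    and add: "\<And>s t. s \<in> {-T..<T} \<Longrightarrow> t \<in> {-T..<T} \<Longrightarrow> s + t \<in> {-T..<T} \<Longrightarrow> f (s + t) = f s + f t"
  shows "of_nat n * h \<in> {-T..<T} \<Longrightarrow> f (of_nat n * h) = of_nat n * f h"
proof (induction n)
  case 0
  have "f (0 + 0) = f 0 + f 0" using T by (intro add) auto
  then show ?case by simp
next
  case (Suc n)
  have hD: "h \<in> {-T..<T}" and nD: "of_nat n * h \<in> {-T..<T}"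
  proof -
    have disj: "0 \<le> of_nat n * h \<and> of_nat n * h \<le> of_nat (Suc n) * h \<and> 0 \<le> h \<and> h \<le> of_nat (Suc n) * h
        \<or> of_nat (Suc n) * h \<le> of_nat n * h \<and> of_nat n * h \<le> 0 \<and> of_nat (Suc n) * h \<le> h \<and> h \<le> 0"
      by (cases "h \<ge> 0") (auto simp: algebra_simps mult_nonneg_nonneg mult_nonneg_nonpos mult_nonpos_nonneg)
    have P: "-T \<le> of_nat (Suc n) * h" "of_nat (Suc n) * h < T" using Suc.prems by auto
    show "h \<in> {-T..<T}" "of_nat n * h \<in> {-T..<T}" unfolding atLeastLessThan_iff
      using disj P T by (smt (verit))+
  qed
  have "f (of_nat (Suc n) * h) = f (of_nat n * h + h)" by (simp add: algebra_simps)
  also have "\<dots> = f (of_nat n * h) + f h"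
    by (rule add[OF nD hD]) (use Suc.prems in \<open>simp add: algebra_simps\<close>)
  also have "\<dots> = of_nat (Suc n) * f h" using Suc.IH[OF nD] by (simp add: algebra_simps)
  finally show ?case .
qed

lemma cauchy_bounded:
  fixes A :: "real \<Rightarrow> complex"
  assumes add: "\<And>s t. s \<in> {-T..<T} \<Longrightarrow> t \<in> {-T..<T} \<Longrightarrow> s + t \<in> {-T..<T} \<Longrightarrow> A (s + t) = A s + A t"
    and sub: "-T \<le> a" "a + \<eta> < T" and eta: "\<eta> > 0"
    and bnd: "\<And>s. s \<in> {a..a+\<eta>} \<Longrightarrow> norm (A s) \<le> M"
  shows "\<exists>c. \<forall>s\<in>{-T..<T}. A s = of_real s * c"
proof -
  have T: "T > 0" using sub eta by linarith
  define \<delta> where "\<delta> = min \<eta> (T/2)"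
  have d: "0 < \<delta>" "\<delta> \<le> \<eta>" "\<delta> \<le> T/2" using eta T unfolding \<delta>_def by auto
  have "A (0 + 0) = A 0 + A 0" using T by (intro add) auto
  then have A0: "A 0 = 0" by simp
  have b2: "norm (A h) \<le> 2 * M" if h: "0 \<le> h" "h \<le> \<delta>" for h
  proof -
    have "A (a + h) = A a + A h" using sub h d T by (intro add) auto
    then have "A h = A (a + h) - A a" by simp
    also have "norm \<dots> \<le> M + M"
      by (rule order_trans[OF norm_triangle_ineq4 add_mono]) (use bnd h d in auto)
    finally show ?thesis by simp
  qed
  define c where "c = A \<delta> / of_real \<delta>"
  define B where "B s = A s - of_real s * c" for s
  have addB: "B (s + t) = B s + B t" if "s \<in> {-T..<T}" "t \<in> {-T..<T}" "s + t \<in> {-T..<T}" for s t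
    unfolding B_def using add[OF that] by (simp add: algebra_simps)
  have Bd: "B \<delta> = 0" unfolding B_def c_def using d by simp
  define K where "K = 2 * M + \<delta> * norm c"
  have smallB: "norm (B h) \<le> K / of_nat n" if n: "n \<ge> 1" and h: "0 \<le> h" "h \<le> \<delta> / of_nat n" for n h
  proof -
    have nh: "of_nat n * h \<le> \<delta>" using h n by (simp add: field_simps)
    have nh0: "0 \<le> of_nat n * h" using h by simp
    have "A (of_nat n * h) = of_nat n * A h" using nh nh0 d by (intro add_mult[OF T add]) auto
    then have "norm (of_nat n * A h) \<le> 2 * M" using b2[OF nh0 nh] by simp
    then have "of_nat n * norm (A h) \<le> 2 * M" by (simp add: norm_mult)
    then have a1: "norm (A h) \<le> 2 * M / of_nat n" using n by (simp add: field_simps)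
    have "norm (of_real h * c) = h * norm c" using h by (simp add: norm_mult)
    also have "\<dots> \<le> \<delta> / of_nat n * norm c" using h by (intro mult_right_mono) auto
    finally have "norm (of_real h * c) \<le> \<delta> / of_nat n * norm c" .
    then have "norm (B h) \<le> 2 * M / of_nat n + \<delta> / of_nat n * norm c"
      unfolding B_def using a1 norm_triangle_ineq4[of "A h" "of_real h * c"] by linarith
    also have "\<dots> = K / of_nat n" unfolding K_def using n by (simp add: field_simps)
    finally show ?thesis .
  qed
  have Bfrac: "B (\<delta> / of_nat n) = 0" if n: "n \<ge> 1" for n
  proof -
    have "B (of_nat n * (\<delta> / of_nat n)) = of_nat n * B (\<delta> / of_nat n)"
      using n d T by (intro add_mult[OF T addB]) auto
    then show ?thesis using Bd n by simp
  qed
  have zero1: "B s = 0" if s: "0 \<le> s" "s \<le> \<delta>" for s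
  proof (rule ccontr)
    assume ne: "B s \<noteq> 0"
    obtain n :: nat where n: "n > K / norm (B s)" using reals_Archimedean2 by blast
    have "0 \<le> 2 * M" using b2[of 0] d by (smt (verit) norm_ge_zero)
    moreover have "0 \<le> \<delta> * norm c" using d by simp
    ultimately have K0: "0 \<le> K" unfolding K_def by linarith
    then have "0 \<le> K / norm (B s)" by simp
    then have n1: "n \<ge> 1" using n by (cases n) auto
    define h where "h = \<delta> / of_nat n"
    have h0: "h > 0" unfolding h_def using d n1 by simp
    define m where "m = nat \<lfloor>s / h\<rfloor>"
    have m1: "of_nat m \<le> s / h" "s / h < of_nat m + 1"
      unfolding m_def using s h0 by (auto simp: of_nat_nat)
      (use floor_less_cancel in \<open>linarith\<close>)?
    have m2: "of_nat m * h \<le> s" "s < of_nat m * h + h"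
      using m1 h0 by (simp_all add: field_simps)
    define r where "r = s - of_nat m * h"
    have r: "0 \<le> r" "r < h" using m2 unfolding r_def by auto
    have mh0: "0 \<le> of_nat m * h" using h0 by simp
    have mhD: "of_nat m * h \<in> {-T..<T}" unfolding atLeastLessThan_iff using mh0 m2 s d by linarith
    have "B s = B (of_nat m * h + r)" unfolding r_def by simp
    also have "\<dots> = B (of_nat m * h) + B r"
    proof (rule addB)
      show "of_nat m * h \<in> {-T..<T}" by (rule mhD)
      show "r \<in> {-T..<T}" "of_nat m * h + r \<in> {-T..<T}"
        unfolding atLeastLessThan_iff r_def using mh0 m2 s d by linarith+
    qed
    also have "B (of_nat m * h) = of_nat m * B h" by (rule add_mult[OF T addB mhD])
    also have "B h = 0" unfolding h_def by (rule Bfrac[OF n1])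
    finally have "B s = B r" by simp
    then have "norm (B s) \<le> K / of_nat n" using smallB[OF n1, of r] r unfolding h_def by simp
    then have "norm (B s) * of_nat n \<le> K" using n1 by (simp add: field_simps)
    moreover have "K < norm (B s) * of_nat n" using n ne by (simp add: field_simps)
    ultimately show False by simp
  qed
  have zero: "B s = 0" if s: "s \<in> {-T..<T}" for s
  proof -
    obtain n :: nat where n: "n > \<bar>s\<bar> / \<delta>" using reals_Archimedean2 by blast
    have "0 \<le> \<bar>s\<bar> / \<delta>" using d by simp
    then have n1: "n \<ge> 1" using n by (cases n) auto
    have Tn: "T \<le> T * of_nat n" using n1 T by simp
    have sn: "\<bar>s\<bar> / of_nat n \<le> \<delta>" using n n1 d by (simp add: field_simps)
    have "B (s / of_nat n) = 0"
    proof (cases "s \<ge> 0")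
      case True then show ?thesis using sn by (intro zero1) auto
    next
      case False
      have "B (s / of_nat n + - s / of_nat n) = B (s / of_nat n) + B (- s / of_nat n)"
      proof (rule addB)
        have "\<bar>s / of_nat n\<bar> \<le> \<delta>" using sn by simp
        then have "s / of_nat n \<le> \<delta>" "- (s / of_nat n) \<le> \<delta>" by (simp_all only: abs_le_iff)
        then show "s / of_nat n \<in> {-T..<T}" "- s / of_nat n \<in> {-T..<T}"
          "s / of_nat n + - s / of_nat n \<in> {-T..<T}"
          unfolding atLeastLessThan_iff using d T by auto
      qed
      moreover have "B (- s / of_nat n) = 0"
      proof (rule zero1)
        show "0 \<le> - s / of_nat n" using False by (intro divide_nonneg_nonneg) auto
        show "- s / of_nat n \<le> \<delta>" using sn False by simp
      qed
      moreover have "B 0 = 0" unfolding B_def using A0 by simp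
      ultimately show ?thesis by simp
    qed
    moreover have "B (of_nat n * (s / of_nat n)) = of_nat n * B (s / of_nat n)"
      using s n1 by (intro add_mult[OF T addB]) auto
    ultimately show ?thesis using n1 by simp
  qed
  show ?thesis
    by (rule exI[of _ c]) (use zero in \<open>auto simp: B_def\<close>)
qed

lemma biadd_bounded:
  fixes \<Phi> :: "real \<Rightarrow> real \<Rightarrow> complex"
  assumes T: "T > 0"
    and a1: "\<And>s1 s2 t. t \<in> {-T..<T} \<Longrightarrow> s1 \<in> {-T..<T} \<Longrightarrow> s2 \<in> {-T..<T} \<Longrightarrow> s1 + s2 \<in> {-T..<T} \<Longrightarrow>
               \<Phi> (s1 + s2) t = \<Phi> s1 t + \<Phi> s2 t"
    and a2: "\<And>s t1 t2. s \<in> {-T..<T} \<Longrightarrow> t1 \<in> {-T..<T} \<Longrightarrow> t2 \<in> {-T..<T} \<Longrightarrow> t1 + t2 \<in> {-T..<T} \<Longrightarrow>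
               \<Phi> s (t1 + t2) = \<Phi> s t1 + \<Phi> s t2"
    and sq: "-T \<le> a" "a + \<eta> < T" "-T \<le> b" "b + \<eta> < T" "\<eta> > 0"
    and bnd: "\<And>s t. s \<in> {a..a+\<eta>} \<Longrightarrow> t \<in> {b..b+\<eta>} \<Longrightarrow> norm (\<Phi> s t) \<le> M"
  shows "\<exists>\<kappa>. \<forall>s\<in>{-T..<T}. \<forall>t\<in>{-T..<T}. \<Phi> s t = of_real (s * t) * \<kappa>"
proof -
  define t0 where "t0 = (if b = 0 then b + \<eta> else b)"
  have t0: "t0 \<in> {b..b+\<eta>}" "t0 \<noteq> 0" "t0 \<in> {-T..<T}" using sq unfolding t0_def by auto
  define s1 where "s1 = (if a = 0 then a + \<eta> else a)"
  have s1: "s1 \<in> {a..a+\<eta>}" "s1 \<noteq> 0" "s1 \<in> {-T..<T}" using sq unfolding s1_def by auto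
  obtain c0 where c0: "\<And>s. s \<in> {-T..<T} \<Longrightarrow> \<Phi> s t0 = of_real s * c0"
    using cauchy_bounded[of T "\<lambda>s. \<Phi> s t0" a \<eta> M] a1 t0 sq bnd by blast
  have step2: "\<Phi> s t = of_real t * (of_real s * c0 / of_real t0)" if s: "s \<in> {a..a+\<eta>}" and t: "t \<in> {-T..<T}" for s t
  proof -
    have sD: "s \<in> {-T..<T}" using s sq by auto
    obtain c where c: "\<And>t. t \<in> {-T..<T} \<Longrightarrow> \<Phi> s t = of_real t * c"
      using cauchy_bounded[of T "\<Phi> s" b \<eta> M] a2[OF sD] s sq bnd by blast
    have "of_real t0 * c = of_real s * c0" using c[OF t0(3)] c0[OF sD] by simp
    then have "c = of_real s * c0 / of_real t0" using t0 by (simp add: field_simps)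
    then show ?thesis using c[OF t] by simp
  qed
  have final: "\<Phi> s t = of_real (s * t) * (c0 / of_real t0)" if s: "s \<in> {-T..<T}" and t: "t \<in> {-T..<T}" for s t
  proof -
    define M' where "M' = T * T * norm c0 / \<bar>t0\<bar>"
    have bd: "norm (\<Phi> s' t) \<le> M'" if s': "s' \<in> {a..a+\<eta>}" for s'
    proof -
      have "\<bar>s'\<bar> \<le> T" "\<bar>t\<bar> \<le> T" using s' sq t by auto
      then have "\<bar>t\<bar> * \<bar>s'\<bar> * norm c0 \<le> T * T * norm c0"
        by (intro mult_right_mono mult_mono) auto
      then have "\<bar>t\<bar> * \<bar>s'\<bar> * norm c0 / \<bar>t0\<bar> \<le> M'" unfolding M'_def
        by (intro divide_right_mono) auto
      then show ?thesis using step2[OF s' t] by (simp add: norm_mult norm_divide)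
    qed
    obtain c where c: "\<And>s. s \<in> {-T..<T} \<Longrightarrow> \<Phi> s t = of_real s * c"
      using cauchy_bounded[of T "\<lambda>s. \<Phi> s t" a \<eta> M'] a1[OF t] sq bd by blast
    have "of_real s1 * c = of_real t * (of_real s1 * c0 / of_real t0)"
      using c[OF s1(3)] step2[OF s1(1) t] by simp
    then have "c = of_real t * c0 / of_real t0" using s1 t0 by (simp add: field_simps)
    then show ?thesis using c[OF s] by simp
  qed
  then show ?thesis by blast
qed

lemma axis_add': "axis i (s + t) = axis i s + (axis i t :: real^'n)"
  by (simp add: vec_eq_iff axis_def)

lemma axis_cube: "T > 0 \<Longrightarrow> axis i s \<in> cube T \<longleftrightarrow> s \<in> {-T..<T}"
  unfolding cube_def axis_def by (auto split: if_splits)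

lemma comp_cube: "x \<in> cube T \<Longrightarrow> x $ i \<in> {-T..<T}" unfolding cube_def by auto

lemma decomp:
  fixes f :: "real^'n \<Rightarrow> complex"
  assumes T: "T > 0" and th: "0 \<le> \<theta>"
    and f: "\<And>a b. a \<in> cube T \<Longrightarrow> b \<in> cube T \<Longrightarrow> a + b \<in> cube T \<Longrightarrow> norm (f (a + b) - f a - f b) \<le> \<theta>"
    and x: "x \<in> cube T"
  shows "norm (f x - (\<Sum>i\<in>UNIV. f (axis i (x$i)))) \<le> (real CARD('n) - 1) * \<theta>"
proof -
  define v where "v S = (\<Sum>i\<in>S. axis i (x$i) :: real^'n)" for S
  have vc: "(v S) $ j = (if j \<in> S then x$j else 0)" for S j
    unfolding v_def by (simp add: axis_def if_distrib cong: if_cong)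
  have vcube: "v S \<in> cube T" for S
    using x T unfolding cube_def by (auto simp: vc)
  have main: "norm (f (v S) - (\<Sum>i\<in>S. f (axis i (x$i)))) \<le> (real (card S) - 1) * \<theta>"
    if "finite S" "S \<noteq> {}" for S
    using that
  proof (induction S rule: finite_ne_induct)
    case (singleton i)
    then show ?case by (simp add: v_def)
  next
    case (insert j F)
    have vi: "v (insert j F) = axis j (x$j) + v F" unfolding v_def using insert by simp
    have aj: "axis j (x$j) \<in> cube T" using axis_cube[OF T] comp_cube[OF x] by blast
    have "f (v (insert j F)) - (\<Sum>i\<in>insert j F. f (axis i (x$i)))
        = (f (axis j (x$j) + v F) - f (axis j (x$j)) - f (v F)) + (f (v F) - (\<Sum>i\<in>F. f (axis i (x$i))))"
      unfolding vi using insert by simp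
    also have "norm \<dots> \<le> \<theta> + (real (card F) - 1) * \<theta>"
      by (rule order_trans[OF norm_triangle_ineq add_mono[OF f insert.IH]]) (use aj vcube[of F] vcube[of "insert j F"] in \<open>simp_all add: vi\<close>)
    also have "\<dots> = (real (card (insert j F)) - 1) * \<theta>" using insert by (simp add: algebra_simps)
    finally show ?case .
  qed
  have "v UNIV = x" by (simp add: vec_eq_iff vc)
  then show ?thesis using main[of UNIV] by simp
qed

lemma G2_linear:
  fixes \<phi> :: "real \<Rightarrow> real \<Rightarrow> complex"
  assumes T: "T > 0"
    and h1: "\<And>s. s \<in> {-T..<T} \<Longrightarrow> add_approx T \<theta> (\<phi> s)"
    and h2: "\<And>t. t \<in> {-T..<T} \<Longrightarrow> add_approx T \<theta> (\<lambda>\<sigma>. \<phi> \<sigma> t)"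
    and x0: "x0 \<in> {-T..<T}" and y0: "y0 \<in> {-T..<T}"
    and cont: "continuous (at (x0, y0) within {-T..<T} \<times> {-T..<T}) (\<lambda>(s, t). \<phi> s t)"
  shows "\<exists>\<kappa>. \<forall>s\<in>{-T..<T}. \<forall>t\<in>{-T..<T}. G2 T \<phi> s t = of_real (s * t) * \<kappa>"
proof -
  have TD1: "\<And>s1 s2 t. t \<in> {-T..<T} \<Longrightarrow> G2 T \<phi> (s1 + s2) t = G2 T \<phi> s1 t + G2 T \<phi> s2 t"
    using two_dim(1)[of T \<theta> \<phi>] T h1 h2 by blast
  have TD2: "\<And>s t1 t2. t1 \<in> {-T..<T} \<Longrightarrow> t2 \<in> {-T..<T} \<Longrightarrow> t1 + t2 \<in> {-T..<T} \<Longrightarrow>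
           G2 T \<phi> s (t1 + t2) = G2 T \<phi> s t1 + G2 T \<phi> s t2"
    using two_dim(2)[of T \<theta> \<phi>] T h1 h2 by blast
  have TD3: "\<And>s t. s \<in> {-T..<T} \<Longrightarrow> t \<in> {-T..<T} \<Longrightarrow> norm (G2 T \<phi> s t - \<phi> s t) \<le> 6 * \<theta>"
    using two_dim(3)[of T \<theta> \<phi>] T h1 h2 by blast
  obtain \<delta> where d: "\<delta> > 0" and dd: "\<And>z. z \<in> {-T..<T} \<times> {-T..<T} \<Longrightarrow> dist z (x0, y0) < \<delta> \<Longrightarrow>
      dist ((\<lambda>(s, t). \<phi> s t) z) ((\<lambda>(s, t). \<phi> s t) (x0, y0)) < 1"
    using cont[unfolded continuous_within_eps_delta, rule_format, of 1] by auto
  define \<eta> where "\<eta> = min (\<delta>/4) (min ((T - x0)/2) ((T - y0)/2))"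
  have eta: "\<eta> > 0" "\<eta> \<le> \<delta>/4" "x0 + \<eta> < T" "y0 + \<eta> < T"
  proof -
    have "\<eta> \<le> (T - x0)/2" "\<eta> \<le> (T - y0)/2" "\<eta> \<le> \<delta>/4" unfolding \<eta>_def by (simp_all only: min_le_iff_disj) simp_all
    moreover have "\<eta> > 0" using d x0 y0 unfolding \<eta>_def by auto
    ultimately show "\<eta> > 0" "\<eta> \<le> \<delta>/4" "x0 + \<eta> < T" "y0 + \<eta> < T" using x0 y0 by auto
  qed
  define M where "M = norm (\<phi> x0 y0) + 1 + 6 * \<theta>"
  have bnd: "norm (G2 T \<phi> s t) \<le> M" if s: "s \<in> {x0..x0+\<eta>}" and t: "t \<in> {y0..y0+\<eta>}" for s t
  proof -
    have sD: "s \<in> {-T..<T}" and tD: "t \<in> {-T..<T}" using s t x0 y0 eta by auto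
    have "dist (s, t) (x0, y0) = sqrt ((dist s x0)^2 + (dist t y0)^2)" by (simp add: dist_Pair_Pair)
    also have "\<dots> \<le> \<bar>dist s x0\<bar> + \<bar>dist t y0\<bar>" by (rule sqrt_sum_squares_le_sum_abs)
    also have "\<dots> \<le> \<eta> + \<eta>" using s t by (auto simp: dist_real_def)
    also have "\<dots> < \<delta>" using eta d by linarith
    finally have "dist (\<phi> s t) (\<phi> x0 y0) < 1" using dd[of "(s, t)"] sD tD by auto
    then have "norm (\<phi> s t) \<le> norm (\<phi> x0 y0) + 1"
      by (smt (verit) dist_norm norm_triangle_ineq2)
    moreover have "norm (G2 T \<phi> s t - \<phi> s t) \<le> 6 * \<theta>" by (rule TD3[OF sD tD])
    ultimately show ?thesis unfolding M_def using norm_triangle_ineq2[of "G2 T \<phi> s t" "\<phi> s t"]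
      by linarith
  qed
  show ?thesis
  proof (rule biadd_bounded[OF T _ _ _ eta(3) _ eta(4) eta(1) bnd])
    show "G2 T \<phi> (s1 + s2) t = G2 T \<phi> s1 t + G2 T \<phi> s2 t" if "t \<in> {-T..<T}" for s1 s2 t
      by (rule TD1[OF that])
    show "G2 T \<phi> s (t1 + t2) = G2 T \<phi> s t1 + G2 T \<phi> s t2"
      if "t1 \<in> {-T..<T}" "t2 \<in> {-T..<T}" "t1 + t2 \<in> {-T..<T}" for s t1 t2
      by (rule TD2[OF that])
  qed (use x0 y0 in auto)
qed

definition phi :: "(real ^ 'n \<Rightarrow> real ^ 'n \<Rightarrow> complex) \<Rightarrow> 'n \<Rightarrow> 'n \<Rightarrow> real \<Rightarrow> real \<Rightarrow> complex" where
  "phi g i k = (\<lambda>s t. g (axis i s) (axis k t))"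

definition Gf :: "real \<Rightarrow> (real ^ 'n \<Rightarrow> real ^ 'n \<Rightarrow> complex) \<Rightarrow> real ^ 'n \<Rightarrow> real ^ 'n \<Rightarrow> complex" where
  "Gf T g x y = (\<Sum>i\<in>UNIV. \<Sum>k\<in>UNIV. G2 T (phi g i k) (x$i) (y$k))"

definition Gs :: "real \<Rightarrow> (real ^ 'n \<Rightarrow> real ^ 'n \<Rightarrow> complex) \<Rightarrow> real ^ 'n \<Rightarrow> real ^ 'n \<Rightarrow> complex" where
  "Gs T g x y = (Gf T g x y + Gf T g y x) / 2"

lemma main_props:
  fixes g :: "real ^ 'n \<Rightarrow> real ^ 'n \<Rightarrow> complex"
  assumes T: "T > 0" and th: "\<theta> \<ge> 0"
    and bx: "\<And>x1 x2 y. x1 \<in> cube T \<Longrightarrow> x2 \<in> cube T \<Longrightarrow> y \<in> cube T \<Longrightarrow> x1 + x2 \<in> cube T \<Longrightarrow>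
        norm (g (x1 + x2) y - g x1 y - g x2 y) \<le> \<theta>"
    and bY: "\<And>x y1 y2. x \<in> cube T \<Longrightarrow> y1 \<in> cube T \<Longrightarrow> y2 \<in> cube T \<Longrightarrow> y1 + y2 \<in> cube T \<Longrightarrow>
        norm (g x (y1 + y2) - g x y1 - g x y2) \<le> \<theta>"
  shows "\<And>i k s. s \<in> {-T..<T} \<Longrightarrow> add_approx T \<theta> (phi g i k s)"
    and "\<And>i k t. t \<in> {-T..<T} \<Longrightarrow> add_approx T \<theta> (\<lambda>\<sigma>. phi g i k \<sigma> t)"
    and "\<And>x1 x2 y. y \<in> cube T \<Longrightarrow> Gf T g (x1 + x2) y = Gf T g x1 y + Gf T g x2 y"
    and "\<And>x y1 y2. y1 \<in> cube T \<Longrightarrow> y2 \<in> cube T \<Longrightarrow> y1 + y2 \<in> cube T \<Longrightarrow>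
           Gf T g x (y1 + y2) = Gf T g x y1 + Gf T g x y2"
    and "\<And>x y. x \<in> cube T \<Longrightarrow> y \<in> cube T \<Longrightarrow>
           norm (g x y - Gf T g x y) \<le> (7 * real (CARD('n))^2 - 1) * \<theta>"
proof -
  have ac: "axis i s \<in> cube T \<longleftrightarrow> s \<in> {-T..<T}" for i s by (rule axis_cube[OF T])
  show h1: "add_approx T \<theta> (phi g i k s)" if s: "s \<in> {-T..<T}" for i k s
    unfolding add_approx_def phi_def
  proof (intro allI impI)
    fix a b assume ab: "a \<in> {-T..<T}" "b \<in> {-T..<T}" "a + b \<in> {-T..<T}"
    show "norm (g (axis i s) (axis k (a + b)) - g (axis i s) (axis k a) - g (axis i s) (axis k b)) \<le> \<theta>"
      unfolding axis_add' by (rule bY) (use ab s in \<open>auto simp: ac axis_add'[symmetric]\<close>)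
  qed
  show h2: "add_approx T \<theta> (\<lambda>\<sigma>. phi g i k \<sigma> t)" if t: "t \<in> {-T..<T}" for i k t
    unfolding add_approx_def phi_def
  proof (intro allI impI)
    fix a b assume ab: "a \<in> {-T..<T}" "b \<in> {-T..<T}" "a + b \<in> {-T..<T}"
    show "norm (g (axis i (a + b)) (axis k t) - g (axis i a) (axis k t) - g (axis i b) (axis k t)) \<le> \<theta>"
      unfolding axis_add' by (rule bx) (use ab t in \<open>auto simp: ac axis_add'[symmetric]\<close>)
  qed
  have TD1: "\<And>s1 s2 t. t \<in> {-T..<T} \<Longrightarrow> G2 T (phi g i k) (s1 + s2) t = G2 T (phi g i k) s1 t + G2 T (phi g i k) s2 t" for i k
    using two_dim(1)[of T \<theta> "phi g i k"] T h1 h2 by blast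
  have TD2: "\<And>s t1 t2. t1 \<in> {-T..<T} \<Longrightarrow> t2 \<in> {-T..<T} \<Longrightarrow> t1 + t2 \<in> {-T..<T} \<Longrightarrow>
           G2 T (phi g i k) s (t1 + t2) = G2 T (phi g i k) s t1 + G2 T (phi g i k) s t2" for i k
    using two_dim(2)[of T \<theta> "phi g i k"] T h1 h2 by blast
  have TD3: "\<And>s t. s \<in> {-T..<T} \<Longrightarrow> t \<in> {-T..<T} \<Longrightarrow> norm (G2 T (phi g i k) s t - phi g i k s t) \<le> 6 * \<theta>" for i k
    using two_dim(3)[of T \<theta> "phi g i k"] T h1 h2 by blast
  show "Gf T g (x1 + x2) y = Gf T g x1 y + Gf T g x2 y" if y: "y \<in> cube T" for x1 x2 y
  proof -
    have "G2 T (phi g i k) (x1$i + x2$i) (y$k) = G2 T (phi g i k) (x1$i) (y$k) + G2 T (phi g i k) (x2$i) (y$k)" for i k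
      using TD1 comp_cube[OF y] by blast
    then show ?thesis unfolding Gf_def by (simp add: sum.distrib)
  qed
  show "Gf T g x (y1 + y2) = Gf T g x y1 + Gf T g x y2"
    if y: "y1 \<in> cube T" "y2 \<in> cube T" "y1 + y2 \<in> cube T" for x y1 y2
  proof -
    have "G2 T (phi g i k) (x$i) (y1$k + y2$k) = G2 T (phi g i k) (x$i) (y1$k) + G2 T (phi g i k) (x$i) (y2$k)" for i k
      using TD2 comp_cube[OF y(1)] comp_cube[OF y(2)] comp_cube[OF y(3)] by simp
    then show ?thesis unfolding Gf_def by (simp add: sum.distrib)
  qed
  show "norm (g x y - Gf T g x y) \<le> (7 * real (CARD('n))^2 - 1) * \<theta>"
    if x: "x \<in> cube T" and y: "y \<in> cube T" for x y
  proof -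
    define d where "d = real CARD('n)"
    let ?a = "\<lambda>i. axis i (x$i)" and ?b = "\<lambda>k. axis k (y$k)"
    have axc: "?a i \<in> cube T" "?b i \<in> cube T" for i using comp_cube[OF x] comp_cube[OF y] ac by auto
    have e1: "norm (g x y - (\<Sum>k\<in>UNIV. g x (?b k))) \<le> (d - 1) * \<theta>"
      unfolding d_def by (rule decomp[OF T th _ y]) (rule bY[OF x])
    have e2: "norm (g x (?b k) - (\<Sum>i\<in>UNIV. g (?a i) (?b k))) \<le> (d - 1) * \<theta>" for k
      unfolding d_def by (rule decomp[OF T th _ x, of "\<lambda>z. g z (?b k)"]) (rule bx[OF _ _ axc(2)])
    have e3: "norm (g (?a i) (?b k) - G2 T (phi g i k) (x$i) (y$k)) \<le> 6 * \<theta>" for i k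
      using TD3[OF comp_cube[OF x] comp_cube[OF y], of i k] by (simp add: phi_def norm_minus_commute)
    have split: "g x y - Gf T g x y = (g x y - (\<Sum>k\<in>UNIV. g x (?b k)))
        + (\<Sum>k\<in>UNIV. g x (?b k) - (\<Sum>i\<in>UNIV. g (?a i) (?b k)))
        + (\<Sum>k\<in>UNIV. \<Sum>i\<in>UNIV. g (?a i) (?b k) - G2 T (phi g i k) (x$i) (y$k))"
    proof -
      have sw: "Gf T g x y = (\<Sum>k\<in>UNIV. \<Sum>i\<in>UNIV. G2 T (phi g i k) (x$i) (y$k))"
        unfolding Gf_def by (rule sum.swap)
      show ?thesis unfolding sw by (simp only: sum_subtractf) simp
    qed
    have "norm (g x y - Gf T g x y) \<le> norm (g x y - (\<Sum>k\<in>UNIV. g x (?b k)))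
        + (\<Sum>k\<in>UNIV. norm (g x (?b k) - (\<Sum>i\<in>UNIV. g (?a i) (?b k))))
        + (\<Sum>k\<in>UNIV. \<Sum>i\<in>UNIV. norm (g (?a i) (?b k) - G2 T (phi g i k) (x$i) (y$k)))"
    proof -
      have n2: "norm (\<Sum>k\<in>UNIV. g x (?b k) - (\<Sum>i\<in>UNIV. g (?a i) (?b k)))
          \<le> (\<Sum>k\<in>UNIV. norm (g x (?b k) - (\<Sum>i\<in>UNIV. g (?a i) (?b k))))" by (rule norm_sum)
      have n3: "norm (\<Sum>k\<in>UNIV. \<Sum>i\<in>UNIV. g (?a i) (?b k) - G2 T (phi g i k) (x$i) (y$k))
          \<le> (\<Sum>k\<in>UNIV. \<Sum>i\<in>UNIV. norm (g (?a i) (?b k) - G2 T (phi g i k) (x$i) (y$k)))"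
        by (rule order_trans[OF norm_sum sum_mono[OF norm_sum]])
      show ?thesis unfolding split
        using norm_triangle_ineq[of "(g x y - (\<Sum>k\<in>UNIV. g x (?b k))) + (\<Sum>k\<in>UNIV. g x (?b k) - (\<Sum>i\<in>UNIV. g (?a i) (?b k)))"
            "\<Sum>k\<in>UNIV. \<Sum>i\<in>UNIV. g (?a i) (?b k) - G2 T (phi g i k) (x$i) (y$k)"]
          norm_triangle_ineq[of "g x y - (\<Sum>k\<in>UNIV. g x (?b k))" "\<Sum>k\<in>UNIV. g x (?b k) - (\<Sum>i\<in>UNIV. g (?a i) (?b k))"]
          n2 n3 by linarith
    qed
    also have "\<dots> \<le> (d - 1) * \<theta> + (\<Sum>k\<in>(UNIV::'n set). (d - 1) * \<theta>) + (\<Sum>k\<in>(UNIV::'n set). \<Sum>i\<in>(UNIV::'n set). 6 * \<theta>)"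
      by (intro add_mono e1 sum_mono e2 e3)
    also have "\<dots> = (7 * d^2 - 1) * \<theta>" unfolding d_def by (simp add: algebra_simps power2_eq_square)
    finally show ?thesis unfolding d_def .
  qed
qed

definition Bf :: "('n \<Rightarrow> 'n \<Rightarrow> complex) \<Rightarrow> real ^ 'n \<Rightarrow> real ^ 'n \<Rightarrow> complex" where
  "Bf \<kappa> x y = ((\<Sum>i\<in>UNIV. \<Sum>k\<in>UNIV. of_real (x$i * y$k) * \<kappa> i k) + (\<Sum>i\<in>UNIV. \<Sum>k\<in>UNIV. of_real (y$i * x$k) * \<kappa> i k)) / 2"

lemma cscale: "c *\<^sub>R (z::complex) = of_real c * z" by (simp add: scaleR_conv_of_real)

lemma Bf_bilinear: "bilinear (Bf \<kappa>)"
  unfolding bilinear_def linear_iff Bf_def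
  by (simp add: algebra_simps sum.distrib sum_distrib_left cscale add_divide_distrib)

lemma Bf_cont: "continuous_on S (\<lambda>(x, y). Bf \<kappa> x y)"
  unfolding Bf_def case_prod_beta by (intro continuous_intros) auto

theorem lemma15:
  fixes T \<theta> :: real
    and g :: "real ^ 'n \<Rightarrow> real ^ 'n \<Rightarrow> complex"
  assumes "T > 0" and "\<theta> \<ge> 0"
    and "symmetric_on (cube T) g"
    and "biadditive_approx_on \<theta> (cube T) g"
  shows "\<exists>G :: real ^ 'n \<Rightarrow> real ^ 'n \<Rightarrow> complex.
           symmetric_on (cube T) G \<and> biadditive_on (cube T) G \<and>
           (\<forall>x\<in>cube T. \<forall>y\<in>cube T.
              norm (g x y - G x y) \<le> (7 * real (CARD('n))^2 - 1) * \<theta>) \<and>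
           ((\<forall>i k. \<exists>x0\<in>{-T..<T}. \<exists>y0\<in>{-T..<T}.
                continuous (at (x0, y0) within {-T..<T} \<times> {-T..<T})
                  (\<lambda>(s, t). g (axis i s) (axis k t)))
            \<longrightarrow> continuous_on (cube T \<times> cube T) (\<lambda>(x, y). G x y) \<and>
                bilinear_on (cube T) G)"
proof -
  note T = assms(1) and th = assms(2)
  have sym: "\<And>x y. x \<in> cube T \<Longrightarrow> y \<in> cube T \<Longrightarrow> g x y = g y x"
    using assms(3) unfolding symmetric_on_def by blast
  have bx: "\<And>x1 x2 y. x1 \<in> cube T \<Longrightarrow> x2 \<in> cube T \<Longrightarrow> y \<in> cube T \<Longrightarrow> x1 + x2 \<in> cube T \<Longrightarrow>
        norm (g (x1 + x2) y - g x1 y - g x2 y) \<le> \<theta>"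
    using assms(4) unfolding biadditive_approx_on_def by blast
  have bY: "\<And>x y1 y2. x \<in> cube T \<Longrightarrow> y1 \<in> cube T \<Longrightarrow> y2 \<in> cube T \<Longrightarrow> y1 + y2 \<in> cube T \<Longrightarrow>
        norm (g x (y1 + y2) - g x y1 - g x y2) \<le> \<theta>"
    using assms(4) unfolding biadditive_approx_on_def by blast
  have h1: "\<And>i k s. s \<in> {-T..<T} \<Longrightarrow> add_approx T \<theta> (phi g i k s)"
    using main_props(1)[of T \<theta> g] T th bx bY by blast
  have h2: "\<And>i k t. t \<in> {-T..<T} \<Longrightarrow> add_approx T \<theta> (\<lambda>\<sigma>. phi g i k \<sigma> t)"
    using main_props(2)[of T \<theta> g] T th bx bY by blast
  have G1: "\<And>x1 x2 y. y \<in> cube T \<Longrightarrow> Gf T g (x1 + x2) y = Gf T g x1 y + Gf T g x2 y"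
    using main_props(3)[of T \<theta> g] T th bx bY by blast
  have G2': "\<And>x y1 y2. y1 \<in> cube T \<Longrightarrow> y2 \<in> cube T \<Longrightarrow> y1 + y2 \<in> cube T \<Longrightarrow>
           Gf T g x (y1 + y2) = Gf T g x y1 + Gf T g x y2"
    using main_props(4)[of T \<theta> g] T th bx bY by blast
  have G3: "\<And>x y. x \<in> cube T \<Longrightarrow> y \<in> cube T \<Longrightarrow>
           norm (g x y - Gf T g x y) \<le> (7 * real (CARD('n))^2 - 1) * \<theta>"
    using main_props(5)[of T \<theta> g] T th bx bY by blast
  have S1: "symmetric_on (cube T) (Gs T g)"
    unfolding symmetric_on_def Gs_def by (simp add: add.commute)
  have S2: "biadditive_on (cube T) (Gs T g)"
    unfolding biadditive_on_def biadditive_approx_on_def Gs_def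
    by (simp add: G1 G2' add_divide_distrib)
  have S3: "\<forall>x\<in>cube T. \<forall>y\<in>cube T. norm (g x y - Gs T g x y) \<le> (7 * real (CARD('n))^2 - 1) * \<theta>"
  proof (intro ballI)
    fix x y :: "real^'n" assume x: "x \<in> cube T" and y: "y \<in> cube T"
    have "g x y - Gs T g x y = ((g x y - Gf T g x y) + (g y x - Gf T g y x)) / 2"
      unfolding Gs_def using sym[OF x y] by (simp add: field_simps)
    also have "norm \<dots> \<le> ((7 * real (CARD('n))^2 - 1) * \<theta> + (7 * real (CARD('n))^2 - 1) * \<theta>) / 2"
      unfolding norm_divide using G3[OF x y] G3[OF y x] norm_triangle_ineq[of "g x y - Gf T g x y" "g y x - Gf T g y x"]
      by (simp only: norm_numeral) (intro divide_right_mono; linarith)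
    finally show "norm (g x y - Gs T g x y) \<le> (7 * real (CARD('n))^2 - 1) * \<theta>" by (simp add: mult.commute)
  qed
  have S4: "continuous_on (cube T \<times> cube T) (\<lambda>(x, y). Gs T g x y) \<and> bilinear_on (cube T) (Gs T g)"
    if hc: "\<forall>i k. \<exists>x0\<in>{-T..<T}. \<exists>y0\<in>{-T..<T}.
                continuous (at (x0, y0) within {-T..<T} \<times> {-T..<T})
                  (\<lambda>(s, t). g (axis i s) (axis k t))"
  proof -
    have "\<exists>\<kappa>. \<forall>s\<in>{-T..<T}. \<forall>t\<in>{-T..<T}. G2 T (phi g i k) s t = of_real (s * t) * \<kappa>" for i k
    proof -
      obtain x0 y0 where x0: "x0 \<in> {-T..<T}" and y0: "y0 \<in> {-T..<T}" and
        c: "continuous (at (x0, y0) within {-T..<T} \<times> {-T..<T}) (\<lambda>(s, t). g (axis i s) (axis k t))"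
        using hc by blast
      have c': "continuous (at (x0, y0) within {-T..<T} \<times> {-T..<T}) (\<lambda>(s, t). phi g i k s t)"
        using c by (simp add: phi_def)
      show ?thesis by (rule G2_linear[OF T h1 h2 x0 y0 c'])
    qed
    then obtain \<kappa> where \<kappa>: "\<And>i k s t. s \<in> {-T..<T} \<Longrightarrow> t \<in> {-T..<T} \<Longrightarrow> G2 T (phi g i k) s t = of_real (s * t) * \<kappa> i k"
      by metis
    have eq: "Gs T g x y = Bf \<kappa> x y" if x: "x \<in> cube T" and y: "y \<in> cube T" for x y
      unfolding Gs_def Gf_def Bf_def using \<kappa> comp_cube[OF x] comp_cube[OF y] by simp
    have "continuous_on (cube T \<times> cube T) (\<lambda>(x, y). Gs T g x y)"
      using Bf_cont[of "cube T \<times> cube T" \<kappa>] by (rule continuous_on_cong[THEN iffD1, rotated 2]) (auto simp: eq)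
    moreover have "bilinear_on (cube T) (Gs T g)"
      unfolding bilinear_on_def using Bf_bilinear eq by blast
    ultimately show ?thesis by blast
  qed
  show ?thesis
    by (rule exI[of _ "Gs T g"]) (use S1 S2 S3 S4 in blast)
qed


end
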